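(* Let $n\geq3$, let $S_n$ act on $V=\mathbb{C}^n$ by the natural permutation representation, and let $\kappa^L$ be a pre-Drinfeld orbifold algebra map for this action. If $\kappa^L$ is supported both on the identity and off the identity (i.e., $\kappa^L_1\neq0$ and $\kappa^L_g\neq 0$ for some $g\neq1$), then $\kappa^L$ does not lift to a Drinfeld orbifold algebra map.
   Context: $S_n$ acts by $\sigma e_i=e_{\sigma(i)}$; $V^g$ is the fixed space of $g$; $\mathrm{Alt}_3$ is the set of cyclic permutations of $\{1,2,3\}$. A linear (resp. constant) $2$-cochain is $\alpha=\sum_g\alpha_g g$ with $\alpha_g:\bigwedge^2V\to V$ (resp. $\to\mathbb{C}$); it is $S_n$-invariant if $h(\alpha_g(v,w))=\alpha_{hgh^{-1}}(hv,hw)$ for all $g,h,v,w$. A pre-Drinfeld orbifold algebra map is an $S_n$-invariant linear 2-cochain $\kappa^L$ with $\operatorname{im}\kappa^L_g\subseteq V^g$ for all $g$ and $\sum_{\sigma\in\mathrm{Alt}_3}\kappa^L_g(v_{\sigma(2)},v_{\sigma(3)})(gv_{\sigma(1)}-v_{\sigma(1)})=0$ in $S(V)$ for all $g,v_1,v_2,v_3$. It lifts to a Drinfeld orbifold algebra map if there is an $S_n$-invariant constant 2-cochain $\kappa^C$ such that for all $g,v_1,v_2,v_3$: $\sum_{\sigma\in\mathrm{Alt}_3}\sum_{xy=g}\kappa^L_x(v_{\sigma(1)}+yv_{\sigma(1)},\kappa^L_y(v_{\sigma(2)},v_{\sigma(3)}))=2\sum_{\sigma\in\mathrm{Alt}_3}\kappa^C_g(v_{\sigma(2)},v_{\sigma(3)})(gv_{\sigma(1)}-v_{\sigma(1)})$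 and $\sum_{\sigma\in\mathrm{Alt}_3}\sum_{xy=g}\kappa^C_x(v_{\sigma(1)}+yv_{\sigma(1)},\kappa^L_y(v_{\sigma(2)},v_{\sigma(3)}))=0$. *)

theory Defs
  imports "HOL-Analysis.Analysis"
begin

text \<open>V = C^n is modelled as complex ^ 'n with CARD('n) = n.
  S_n is the set of permutations of the index type 'n; the group product is composition.\<close>

type_synonym 'n vec = "complex ^ 'n"
type_synonym 'n perm = "'n \<Rightarrow> 'n"

definition Sn :: "('n::finite) perm set" where
  "Sn = {p. p permutes (UNIV :: 'n set)}"

text \<open>Permutation action: sigma e_i = e_(sigma i), i.e. (sigma v)_j = v_(sigma^-1 j).\<close>
definition act :: "('n::finite) perm \<Rightarrow> ('n::finite) vec \<Rightarrow> ('n::finite) vec" where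
  "act g v = (\<chi> j. v $ (inv g j))"

definition alt_bilin_V :: "(('n::finite) vec \<Rightarrow> ('n::finite) vec \<Rightarrow> ('n::finite) vec) \<Rightarrow> bool" where
  "alt_bilin_V f \<longleftrightarrow>
     (\<forall>a b u v w. f (a *s u + b *s v) w = a *s f u w + b *s f v w) \<and>
     (\<forall>a b u v w. f w (a *s u + b *s v) = a *s f w u + b *s f w v) \<and>
     (\<forall>v. f v v = 0)"

definition alt_bilin_C :: "(('n::finite) vec \<Rightarrow> ('n::finite) vec \<Rightarrow> complex) \<Rightarrow> bool" where
  "alt_bilin_C f \<longleftrightarrow>
     (\<forall>a b u v w. f (a *s u + b *s v) w = a * f u w + b * f v w) \<and>
     (\<forall>a b u v w. f w (a *s u + b *s v) = a * f w u + b * f w v) \<and>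
     (\<forall>v. f v v = 0)"

definition linear_cochain :: "(('n::finite) perm \<Rightarrow> ('n::finite) vec \<Rightarrow> ('n::finite) vec \<Rightarrow> ('n::finite) vec) \<Rightarrow> bool" where
  "linear_cochain \<alpha> \<longleftrightarrow> (\<forall>g\<in>Sn. alt_bilin_V (\<alpha> g))"

definition constant_cochain :: "(('n::finite) perm \<Rightarrow> ('n::finite) vec \<Rightarrow> ('n::finite) vec \<Rightarrow> complex) \<Rightarrow> bool" where
  "constant_cochain \<alpha> \<longleftrightarrow> (\<forall>g\<in>Sn. alt_bilin_C (\<alpha> g))"

definition invariant_L :: "(('n::finite) perm \<Rightarrow> ('n::finite) vec \<Rightarrow> ('n::finite) vec \<Rightarrow> ('n::finite) vec) \<Rightarrow> bool" where
  "invariant_L \<alpha> \<longleftrightarrow> (\<forall>g\<in>Sn. \<forall>h\<in>Sn. \<forall>v w.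
      act h (\<alpha> g v w) = \<alpha> (h \<circ> g \<circ> inv h) (act h v) (act h w))"

definition invariant_C :: "(('n::finite) perm \<Rightarrow> ('n::finite) vec \<Rightarrow> ('n::finite) vec \<Rightarrow> complex) \<Rightarrow> bool" where
  "invariant_C \<alpha> \<longleftrightarrow> (\<forall>g\<in>Sn. \<forall>h\<in>Sn. \<forall>v w.
      \<alpha> g v w = \<alpha> (h \<circ> g \<circ> inv h) (act h v) (act h w))"

text \<open>The product u v of two vectors in S^2(V), realised via the standard embedding
  S^2(V) into V (x) V by symmetrisation: coordinates (i,j) -> u_i v_j + u_j v_i.\<close>
definition sym_prod :: "('n::finite) vec \<Rightarrow> ('n::finite) vec \<Rightarrow> ('n \<times> 'n \<Rightarrow> complex)" where
  "sym_prod u v = (\<lambda>(i, j). u $ i * v $ j + u $ j * v $ i)"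

definition pre_DOA_map :: "(('n::finite) perm \<Rightarrow> ('n::finite) vec \<Rightarrow> ('n::finite) vec \<Rightarrow> ('n::finite) vec) \<Rightarrow> bool" where
  "pre_DOA_map \<kappa> \<longleftrightarrow>
     linear_cochain \<kappa> \<and> invariant_L \<kappa> \<and>
     (\<forall>g\<in>Sn. \<forall>v w. act g (\<kappa> g v w) = \<kappa> g v w) \<and>
     (\<forall>g\<in>Sn. \<forall>v1 v2 v3.
        (\<lambda>ij. sym_prod (\<kappa> g v2 v3) (act g v1 - v1) ij
            + sym_prod (\<kappa> g v3 v1) (act g v2 - v2) ij
            + sym_prod (\<kappa> g v1 v2) (act g v3 - v3) ij) = (\<lambda>ij. 0))"

definition factor_pairs :: "('n::finite) perm \<Rightarrow> (('n::finite) perm \<times> ('n::finite) perm) set" where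
  "factor_pairs g = {(x, y). x \<in> Sn \<and> y \<in> Sn \<and> x \<circ> y = g}"

definition lifts_to_DOA_map :: "(('n::finite) perm \<Rightarrow> ('n::finite) vec \<Rightarrow> ('n::finite) vec \<Rightarrow> ('n::finite) vec) \<Rightarrow> bool" where
  "lifts_to_DOA_map \<kappa>L \<longleftrightarrow>
     (\<exists>\<kappa>C. constant_cochain \<kappa>C \<and> invariant_C \<kappa>C \<and>
       (\<forall>g\<in>Sn. \<forall>v1 v2 v3.
          (\<Sum>(x, y)\<in>factor_pairs g.
               \<kappa>L x (v1 + act y v1) (\<kappa>L y v2 v3)
             + \<kappa>L x (v2 + act y v2) (\<kappa>L y v3 v1)
             + \<kappa>L x (v3 + act y v3) (\<kappa>L y v1 v2))
          = 2 *s (\<kappa>C g v2 v3 *s (act g v1 - v1)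
                 + \<kappa>C g v3 v1 *s (act g v2 - v2)
                 + \<kappa>C g v1 v2 *s (act g v3 - v3))) \<and>
       (\<forall>g\<in>Sn. \<forall>v1 v2 v3.
          (\<Sum>(x, y)\<in>factor_pairs g.
               \<kappa>C x (v1 + act y v1) (\<kappa>L y v2 v3)
             + \<kappa>C x (v2 + act y v2) (\<kappa>L y v3 v1)
             + \<kappa>C x (v3 + act y v3) (\<kappa>L y v1 v2)) = 0))"

end

theory Submission imports Defs "HOL-Combinatorics.Cycles" begin


definition onev :: "('n::finite) vec" where "onev = (\<chi> j. 1)"
definition sig :: "('n::finite) vec \<Rightarrow> complex" where "sig v = (\<Sum>j\<in>UNIV. v $ j)"
definition ee :: "'n::finite \<Rightarrow> 'n vec" where "ee i = axis i 1"

lemma act_add: "act g (u + v) = act g u + act g v"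
  by (simp add: act_def vec_eq_iff)
lemma act_diff: "act g (u - v) = act g u - act g v"
  by (simp add: act_def vec_eq_iff)
lemma act_smult: "act g (c *s v) = c *s act g v"
  by (simp add: act_def vec_eq_iff)
lemma act_zero: "act g 0 = 0"
  by (simp add: act_def vec_eq_iff)
lemma act_one: "act g onev = onev"
  by (simp add: act_def onev_def vec_eq_iff)
lemma act_id: "act id v = v"
  by (simp add: act_def vec_eq_iff)
lemma act_sum: "act g (sum f S) = sum (\<lambda>k. act g (f k)) S"
  by (simp add: act_def vec_eq_iff)

lemma act_comp:
  assumes "p permutes UNIV" "q permutes UNIV"
  shows "act (p \<circ> q) v = act p (act q v)"
proof -
  have "inv (p \<circ> q) = inv q \<circ> inv p"
    using assms by (simp add: o_inv_distrib permutes_bij)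
  then show ?thesis by (simp add: act_def vec_eq_iff)
qed

lemma act_pow:
  assumes "p permutes UNIV"
  shows "act (p ^^ k) v = (act p ^^ k) v"
proof (induction k arbitrary: v)
  case 0 then show ?case by (simp add: act_id[unfolded id_def])
next
  case (Suc k)
  have "p ^^ k permutes UNIV" using assms by (simp add: permutes_funpow)
  then have "act (p ^^ Suc k) v = act p (act (p^^k) v)"
    using assms by (simp only: funpow.simps(2) act_comp)
  also have "\<dots> = act p ((act p ^^ k) v)" using Suc.IH by simp
  also have "\<dots> = (act p ^^ Suc k) v" by simp
  finally show ?case .
qed

lemma act_finite_order:
  assumes "p \<in> Sn"
  obtains m where "m > 0" "\<And>v. (act p ^^ m) v = v"
proof -
  have pp: "p permutes UNIV" using assms by (simp add: Sn_def)
  then have "permutation p" by (simp add: permutes_imp_permutation)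
  then obtain m where m: "(p ^^ m) = id" "m > 0" by (rule permutation_is_nilpotent)
  have "(act p ^^ m) v = v" for v
    using act_pow[OF pp, of m v] m by (simp add: act_id)
  then show ?thesis using that m by blast
qed

lemma act_ee:
  assumes "p permutes UNIV"
  shows "act p (ee i) = ee (p i)"
proof -
  have "inv p j = i \<longleftrightarrow> j = p i" for j
    using assms by (metis permutes_inverses(1) permutes_inverses(2))
  then show ?thesis by (auto simp add: act_def ee_def vec_eq_iff axis_def)
qed



context
  fixes K :: "('n::finite) vec \<Rightarrow> 'n vec \<Rightarrow> 'n vec"
  assumes ab: "alt_bilin_V K"
begin

lemma bl1: "K (a *s u + b *s v) w = a *s K u w + b *s K v w"
  using ab unfolding alt_bilin_V_def by blast
lemma bl2: "K w (a *s u + b *s v) = a *s K w u + b *s K w v"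
  using ab unfolding alt_bilin_V_def by blast
lemma bl_diag: "K v v = 0"
  using ab unfolding alt_bilin_V_def by blast

lemma bl_zero1: "K 0 w = 0"
  using bl1[of 0 0 0 0 w] by simp
lemma bl_zero2: "K w 0 = 0"
  using bl2[of w 0 0 0 0] by simp
lemma bl_add1: "K (u + v) w = K u w + K v w"
  using bl1[of 1 u 1 v w] by simp
lemma bl_add2: "K w (u + v) = K w u + K w v"
  using bl2[of w 1 u 1 v] by simp
lemma bl_smult1: "K (c *s u) w = c *s K u w"
  using bl1[of c u 0 0 w] by (simp add: bl_zero1)
lemma bl_smult2: "K w (c *s u) = c *s K w u"
  using bl2[of w c u 0 0] by (simp add: bl_zero2)
lemma bl_diff1: "K (u - v) w = K u w - K v w"
  using bl1[of 1 u "-1" v w] by (simp add: vector_sneg_minus1[symmetric])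
lemma bl_diff2: "K w (u - v) = K w u - K w v"
  using bl2[of w 1 u "-1" v] by (simp add: vector_sneg_minus1[symmetric])
lemma bl_antisym: "K u w = - K w u"
proof -
  have "0 = K (u + w) (u + w)" by (simp add: bl_diag)
  also have "\<dots> = K u w + K w u" by (subst bl_add1) (simp add: bl_add2 bl_diag)
  finally have "K u w + K w u = 0" by (rule sym)
  then show ?thesis by (simp add: eq_neg_iff_add_eq_0)
qed
lemma bl_sum1: "K (sum f S) w = sum (\<lambda>k. K (f k) w) S"
proof (cases "finite S")
  case True then show ?thesis
    by (induction S rule: finite_induct) (simp_all add: bl_zero1 bl_add1)
next
  case False then show ?thesis by (simp add: bl_zero1)
qed
lemma bl_sum2: "K w (sum f S) = sum (\<lambda>k. K w (f k)) S"
proof (cases "finite S")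
  case True then show ?thesis
    by (induction S rule: finite_induct) (simp_all add: bl_zero2 bl_add2)
next
  case False then show ?thesis by (simp add: bl_zero2)
qed

lemma bl_expand: "K v w = (\<Sum>i\<in>UNIV. \<Sum>j\<in>UNIV. (v$i * w$j) *s K (ee i) (ee j))"
proof -
  have "K v w = K (\<Sum>i\<in>UNIV. v$i *s ee i) (\<Sum>j\<in>UNIV. w$j *s ee j)"
    by (simp add: ee_def basis_expansion)
  also have "\<dots> = (\<Sum>i\<in>UNIV. \<Sum>j\<in>UNIV. (v$i * w$j) *s K (ee i) (ee j))"
    apply (simp add: bl_sum1 bl_sum2 bl_smult1 bl_smult2 vec_eq_iff sum_distrib_left mult.assoc)
    apply (subst sum.swap)
    apply (simp add: mult.left_commute)
    done
  finally show ?thesis .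
qed

end


lemma Sn_id: "id \<in> Sn" by (simp add: Sn_def permutes_id)
lemma Sn_transpose: "Transposition.transpose i j \<in> Sn" by (simp add: Sn_def permutes_swap_id)

lemma sum_ee_form:
  fixes a :: complex
  shows "(\<Sum>i\<in>UNIV. \<Sum>j\<in>UNIV. (v$i * w$j) *s (a *s (ee i - ee j))) = a *s (sig w *s v - sig v *s w)"
proof -
  have "(\<Sum>i\<in>UNIV. \<Sum>j\<in>UNIV. (v$i * w$j) *s (a *s (ee i - ee j))) $ p = (a *s (sig w *s v - sig v *s w)) $ p" for p
  proof -
    have "(\<Sum>i\<in>UNIV. \<Sum>j\<in>UNIV. (v$i * w$j) *s (a *s (ee i - ee j))) $ p
        = (\<Sum>i\<in>UNIV. \<Sum>j\<in>UNIV. a * (v$i * w$j) * (if p = i then 1 else 0))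
          - (\<Sum>i\<in>UNIV. \<Sum>j\<in>UNIV. a * (v$i * w$j) * (if p = j then 1 else 0))"
      by (simp add: ee_def axis_def algebra_simps sum_subtractf)
    also have "\<dots> = a * v$p * sig w - a * sig v * w$p"
    proof -
      have 1: "(\<Sum>i\<in>UNIV. \<Sum>j\<in>UNIV. a * (v$i * w$j) * (if p = i then 1 else 0))
           = (\<Sum>i\<in>UNIV. (if p = i then (\<Sum>j\<in>UNIV. a * (v$i * w$j)) else 0))"
        by (rule sum.cong) auto
      have 2: "(\<Sum>i\<in>UNIV. \<Sum>j\<in>UNIV. a * (v$i * w$j) * (if p = j then 1 else 0))
           = (\<Sum>j\<in>UNIV. (if p = j then (\<Sum>i\<in>UNIV. a * (v$i * w$j)) else 0))"
        by (subst sum.swap) (rule sum.cong, auto)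
      show ?thesis unfolding 1 2
        by (simp add: sig_def sum_distrib_left sum_distrib_right mult.assoc mult.left_commute)
    qed
    finally show ?thesis by (simp add: algebra_simps)
  qed
  then show ?thesis by (simp add: vec_eq_iff)
qed

lemma two_elems:
  fixes dummy :: "'n::finite"
  assumes "CARD('n) \<ge> 3"
  obtains i0 j0 :: 'n where "i0 \<noteq> j0"
proof -
  obtain i0 :: 'n where True by blast
  have "\<exists>j0::'n. j0 \<noteq> i0"
  proof (rule ccontr)
    assume "\<not> ?thesis"
    then have "(UNIV::'n set) = {i0}" by auto
    then have "card (UNIV::'n set) = card {i0}" by (rule arg_cong)
    then show False using assms by simp
  qed
  then show ?thesis using that by blast
qed

lemma kappa_id_form:
  fixes \<kappa> :: "('n::finite) perm \<Rightarrow> 'n vec \<Rightarrow> 'n vec \<Rightarrow> 'n vec"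
  assumes card: "CARD('n) \<ge> 3" and pre: "pre_DOA_map \<kappa>"
  shows "\<exists>a. \<forall>v w. \<kappa> id v w = a *s (sig w *s v - sig v *s w)"
proof -
  define K where "K = \<kappa> id"
  have ab: "alt_bilin_V K" using pre Sn_id
    unfolding K_def pre_DOA_map_def linear_cochain_def by blast
  have eqv: "act h (K v w) = K (act h v) (act h w)" if "h \<in> Sn" for h v w
  proof -
    have e: "h \<circ> id \<circ> inv h = id" using that by (simp add: Sn_def permutes_inv_o)
    have "invariant_L \<kappa>" using pre by (simp add: pre_DOA_map_def)
    then have "act h (\<kappa> id v w) = \<kappa> (h \<circ> id \<circ> inv h) (act h v) (act h w)"
      using that Sn_id unfolding invariant_L_def by blast
    then show ?thesis unfolding e K_def .
  qed
  define \<alpha> where "\<alpha> i j = K (ee i) (ee j) $ i" for i j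
  have coord: "(act (Transposition.transpose i j) x) $ p = x $ (Transposition.transpose i j p)" for i j x p
    by (simp add: act_def)
  have W: "K (ee i) (ee j) = \<alpha> i j *s (ee i - ee j)" if "i \<noteq> j" for i j
  proof -
    let ?h = "Transposition.transpose i j"
    have hp: "?h permutes UNIV" by (simp add: permutes_swap_id)
    have "act ?h (K (ee i) (ee j)) = K (ee j) (ee i)"
      using eqv[OF Sn_transpose] act_ee[OF hp] by simp
    also have "\<dots> = - K (ee i) (ee j)" using bl_antisym[OF ab] by blast
    finally have F: "act ?h (K (ee i) (ee j)) = - K (ee i) (ee j)" .
    have A: "K (ee i) (ee j) $ (?h p) = - K (ee i) (ee j) $ p" for p
    proof -
      have "(act ?h (K (ee i) (ee j))) $ p = (- K (ee i) (ee j)) $ p" by (simp only: F)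
      then show ?thesis by (simp add: coord)
    qed
    show ?thesis
    proof (subst vec_eq_iff, intro allI)
      fix p
      show "K (ee i) (ee j) $ p = (\<alpha> i j *s (ee i - ee j)) $ p"
      proof (cases "p = i \<or> p = j")
        case True
        then show ?thesis using A[of i] that by (auto simp: \<alpha>_def ee_def axis_def)
      next
        case False
        then have "K (ee i) (ee j) $ p = - K (ee i) (ee j) $ p" using A[of p] by simp
        then have "K (ee i) (ee j) $ p = 0" by simp
        then show ?thesis using False by (auto simp: ee_def axis_def)
      qed
    qed
  qed
  have sym: "\<alpha> j i = \<alpha> i j" if "i \<noteq> j" for i j
  proof -
    have "K (ee j) (ee i) = - K (ee i) (ee j)" using bl_antisym[OF ab] by blast
    then have "\<alpha> j i = (- K (ee i) (ee j)) $ j" unfolding \<alpha>_def by (simp only:)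
    also have "\<dots> = - (\<alpha> i j *s (ee i - ee j)) $ j" by (simp only: W[OF that] vector_uminus_component)
    finally show ?thesis using that by (simp add: ee_def axis_def)
  qed
  have shift: "\<alpha> i k = \<alpha> i j" if "i \<noteq> j" "i \<noteq> k" for i j k
  proof (cases "j = k")
    case True then show ?thesis by simp
  next
    case False
    let ?h = "Transposition.transpose j k"
    have hp: "?h permutes UNIV" by (simp add: permutes_swap_id)
    have "act ?h (K (ee i) (ee j)) = K (ee i) (ee k)"
      using eqv[OF Sn_transpose] act_ee[OF hp] that by simp
    then have "K (ee i) (ee k) $ i = K (ee i) (ee j) $ (?h i)"
      using coord[of j k "K (ee i) (ee j)" i] by simp
    then show ?thesis using that by (simp add: \<alpha>_def)
  qed
  obtain i0 j0 :: 'n where ij0: "i0 \<noteq> j0" using two_elems[OF card] by blast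
  have const: "\<alpha> i j = \<alpha> i0 j0" if "i \<noteq> j" for i j
  proof (cases "j = i0")
    case True
    then have "\<alpha> i j = \<alpha> i0 i" using sym[of j i] that by simp
    also have "\<dots> = \<alpha> i0 j0" using shift[of i0 j0 i] True that ij0 by simp
    finally show ?thesis .
  next
    case False
    have "\<alpha> i j = \<alpha> j i" using sym[of i j] that by simp
    also have "\<dots> = \<alpha> j i0" using shift[of j i i0] that False by simp
    also have "\<dots> = \<alpha> i0 j" using sym[of j i0] False by simp
    also have "\<dots> = \<alpha> i0 j0" using shift[of i0 j0 j] False ij0 by simp
    finally show ?thesis .
  qed
  define a where "a = \<alpha> i0 j0"
  have Wall: "K (ee i) (ee j) = a *s (ee i - ee j)" for i j
  proof (cases "i = j")
    case True then show ?thesis using bl_diag[OF ab] by simp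
  next
    case False then show ?thesis using W const a_def by simp
  qed
  have "K v w = a *s (sig w *s v - sig v *s w)" for v w
    using bl_expand[OF ab, of v w] Wall sum_ee_form[of v w a] by simp
  then show ?thesis unfolding K_def by blast
qed



lemma sym_prod_zero:
  assumes "(\<lambda>ij. sym_prod A d ij) = (\<lambda>ij. 0)" "d \<noteq> 0"
  shows "A = 0"
proof -
  obtain q where q: "d $ q \<noteq> 0" using assms(2) by (auto simp: vec_eq_iff)
  have s: "A $ p * d $ r + A $ r * d $ p = 0" for p r
    using fun_cong[OF assms(1), of "(p, r)"] by (simp add: sym_prod_def)
  have Aq: "A $ q = 0" using s[of q q] q by simp
  have "A $ p = 0" for p using s[of p q] q Aq by simp
  then show ?thesis by (simp add: vec_eq_iff)
qed

lemma sym_prod_zero2: "sym_prod A 0 = (\<lambda>ij. 0)"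
  by (simp add: sym_prod_def fun_eq_iff)

lemma kappa_one_zero:
  fixes \<kappa> :: "('n::finite) perm \<Rightarrow> 'n vec \<Rightarrow> 'n vec \<Rightarrow> 'n vec"
  assumes pre: "pre_DOA_map \<kappa>" and y: "y \<in> Sn" "y \<noteq> id"
  shows "\<kappa> y onev w = 0"
proof -
  define K where "K = \<kappa> y"
  have yp: "y permutes UNIV" using y by (simp add: Sn_def)
  have ab: "alt_bilin_V K" using pre y
    unfolding K_def pre_DOA_map_def linear_cochain_def by blast
  have fixd: "act y (K v w) = K v w" for v w
    using pre y unfolding K_def pre_DOA_map_def by blast
  have inv: "K v w = K (act y v) (act y w)" for v w
  proof -
    have e: "y \<circ> y \<circ> inv y = y" using yp by (simp add: o_assoc[symmetric] permutes_inv_o)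
    have "invariant_L \<kappa>" using pre by (simp add: pre_DOA_map_def)
    then have "act y (\<kappa> y v w) = \<kappa> (y \<circ> y \<circ> inv y) (act y v) (act y w)"
      using y unfolding invariant_L_def by blast
    then show ?thesis using fixd unfolding e K_def by simp
  qed
  have stepA: "K u1 u2 = 0" if "act y u1 = u1" "act y u2 = u2" for u1 u2
  proof -
    obtain i where i: "y i \<noteq> i" using y(2) by (auto simp: fun_eq_iff)
    have d: "act y (ee i) - ee i \<noteq> 0"
    proof
      assume "act y (ee i) - ee i = 0"
      then have "(act y (ee i) - ee i) $ (y i) = 0" by simp
      then show False using i unfolding act_ee[OF yp] by (simp add: ee_def axis_def)
    qed
    have "\<forall>v1 v2 v3.
        (\<lambda>ij. sym_prod (\<kappa> y v2 v3) (act y v1 - v1) ij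
            + sym_prod (\<kappa> y v3 v1) (act y v2 - v2) ij
            + sym_prod (\<kappa> y v1 v2) (act y v3 - v3) ij) = (\<lambda>ij. 0)"
      using pre y unfolding pre_DOA_map_def by blast
    then have "(\<lambda>ij. sym_prod (K u2 (ee i)) (act y u1 - u1) ij
            + sym_prod (K (ee i) u1) (act y u2 - u2) ij
            + sym_prod (K u1 u2) (act y (ee i) - ee i) ij) = (\<lambda>ij. 0)"
      unfolding K_def by blast
    then have "(\<lambda>ij. sym_prod (K u1 u2) (act y (ee i) - ee i) ij) = (\<lambda>ij. 0)"
      using that by (simp add: sym_prod_zero2)
    then show ?thesis using d by (rule sym_prod_zero)
  qed
  have pw: "K onev ((act y ^^ k) w) = K onev w" for k
  proof (induction k)
    case 0 then show ?case by simp
  next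
    case (Suc k)
    have "K onev ((act y ^^ Suc k) w) = K (act y onev) (act y ((act y ^^ k) w))"
      by (simp add: act_one)
    also have "\<dots> = K onev ((act y ^^ k) w)" using inv by simp
    finally show ?case using Suc by simp
  qed
  obtain m where m: "m > 0" "\<And>v. (act y ^^ m) v = v" using act_finite_order[OF y(1)] by blast
  define f where "f k = (act y ^^ k) w" for k
  define z where "z = (\<Sum>k<m. f k)"
  have "act y z = (\<Sum>k<m. f (Suc k))" by (simp add: z_def act_sum f_def)
  also have "\<dots> = z"
  proof -
    have "(\<Sum>k<Suc m. f k) = f 0 + (\<Sum>k<m. f (Suc k))" by (rule sum.lessThan_Suc_shift)
    moreover have "(\<Sum>k<Suc m. f k) = z + f m" by (simp add: z_def)
    moreover have "f m = f 0" using m by (simp add: f_def)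
    ultimately show ?thesis by (metis add.commute add_left_cancel)
  qed
  finally have zf: "act y z = z" .
  have "K onev z = 0" using stepA[OF act_one zf] .
  moreover have "K onev z = (\<Sum>k<m. K onev w)"
    by (simp add: z_def bl_sum2[OF ab] f_def pw)
  ultimately have "(\<Sum>k<m. K onev w) $ p = 0" for p by simp
  then have "(\<Sum>k<m. (K onev w) $ p) = 0" for p by (simp only: sum_component)
  then have "of_nat m * (K onev w) $ p = 0" for p by simp
  then have "(K onev w) $ p = 0" for p using m(1) by simp
  then show ?thesis unfolding K_def by (simp add: vec_eq_iff)
qed



lemma coboundary_fixed_zero:
  assumes g: "g \<in> Sn" and fx: "act g X = X" and X: "X = act g u - u"
  shows "X = 0"
proof -
  have it: "(act g ^^ k) u = u + of_nat k *s X" for k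
  proof (induction k)
    case 0 then show ?case by simp
  next
    case (Suc k)
    have "(act g ^^ Suc k) u = act g (u + of_nat k *s X)" using Suc by simp
    also have "\<dots> = act g u + of_nat k *s X" by (simp add: act_add act_smult fx)
    also have "\<dots> = u + X + of_nat k *s X" using X by simp
    finally show ?case by (simp add: vec_eq_iff algebra_simps)
  qed
  obtain m where m: "m > 0" "\<And>v. (act g ^^ m) v = v" using act_finite_order[OF g] by blast
  have "u = u + of_nat m *s X" using it[of m] m(2) by simp
  then have "of_nat m *s X = 0" by (metis add_cancel_right_right)
  then show ?thesis using m(1) by (simp add: vec_eq_iff)
qed

lemma two_mul_zero: "(2::complex) * z = 0 \<Longrightarrow> z = 0" by simp

lemma sig_onev: "sig (onev :: ('n::finite) vec) = of_nat CARD('n)"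
  by (simp add: sig_def onev_def)

lemma sig_add: "sig (u + v) = sig u + sig v"
  by (simp add: sig_def sum.distrib)


theorem proposition6p3:
  fixes \<kappa>L :: "('n::finite) perm \<Rightarrow> 'n vec \<Rightarrow> 'n vec \<Rightarrow> 'n vec"
  assumes "CARD('n) \<ge> 3"
    and "pre_DOA_map \<kappa>L"
    and "\<kappa>L id \<noteq> (\<lambda>v w. 0)"
    and "\<exists>g\<in>Sn. g \<noteq> id \<and> \<kappa>L g \<noteq> (\<lambda>v w. 0)"
  shows "\<not> lifts_to_DOA_map \<kappa>L"
proof
  assume lift: "lifts_to_DOA_map \<kappa>L"
  note pre = assms(2)
  obtain a where ka: "\<And>v w. \<kappa>L id v w = a *s (sig w *s v - sig v *s w)"
    using kappa_id_form[OF assms(1,2)] by blast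
  have a0: "a \<noteq> 0"
  proof
    assume "a = 0"
    then have "\<kappa>L id = (\<lambda>v w. 0)" using ka by (simp add: fun_eq_iff)
    then show False using assms(3) by simp
  qed
  obtain g where g: "g \<in> Sn" "g \<noteq> id" "\<kappa>L g \<noteq> (\<lambda>v w. 0)" using assms(4) by blast
  obtain v2 v3 where c0: "\<kappa>L g v2 v3 \<noteq> 0" using g(3) by (auto simp: fun_eq_iff)
  define c where "c = \<kappa>L g v2 v3"
  have abx: "alt_bilin_V (\<kappa>L x)" if "x \<in> Sn" for x
    using pre that unfolding pre_DOA_map_def linear_cochain_def by blast
  have one0: "\<kappa>L x onev w = 0" if "x \<in> Sn" "x \<noteq> id" for x w
    using kappa_one_zero[OF pre that] .
  have one0': "\<kappa>L x w onev = 0" if "x \<in> Sn" "x \<noteq> id" for x w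
    using bl_antisym[OF abx[OF that(1)], of w onev] one0[OF that] by simp
  have actone: "act y onev = onev" for y :: "'n perm" by (rule act_one)
  obtain \<kappa>C where eq1: "\<forall>g\<in>Sn. \<forall>v1 v2 v3.
          (\<Sum>(x, y)\<in>factor_pairs g.
               \<kappa>L x (v1 + act y v1) (\<kappa>L y v2 v3)
             + \<kappa>L x (v2 + act y v2) (\<kappa>L y v3 v1)
             + \<kappa>L x (v3 + act y v3) (\<kappa>L y v1 v2))
          = 2 *s (\<kappa>C g v2 v3 *s (act g v1 - v1)
                 + \<kappa>C g v3 v1 *s (act g v2 - v2)
                 + \<kappa>C g v1 v2 *s (act g v3 - v3))"
    using lift unfolding lifts_to_DOA_map_def by blast
  define T where "T x y = \<kappa>L x (onev + act y onev) (\<kappa>L y v2 v3)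
             + \<kappa>L x (v2 + act y v2) (\<kappa>L y v3 onev)
             + \<kappa>L x (v3 + act y v3) (\<kappa>L y onev v2)" for x y
  have E: "(\<Sum>(x, y)\<in>factor_pairs g. T x y)
          = 2 *s (\<kappa>C g v2 v3 *s (act g onev - onev)
                 + \<kappa>C g v3 onev *s (act g v2 - v2)
                 + \<kappa>C g onev v2 *s (act g v3 - v3))"
    using eq1 g(1) unfolding T_def by blast
  have Tvan: "T x y = 0" if "x \<in> Sn" "y \<in> Sn" "x \<noteq> id" "y \<noteq> id" for x y
  proof -
    have "\<kappa>L x (onev + act y onev) w = 0" for w
      by (simp only: actone bl_add1[OF abx[OF that(1)]] one0[OF that(1,3)]) simp
    then show ?thesis unfolding T_def
      by (simp add: one0[OF that(2,4)] one0'[OF that(2,4)] bl_zero2[OF abx[OF that(1)]])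
  qed
  have fin: "finite (factor_pairs g)" by simp
  have sub: "{(id, g), (g, id)} \<subseteq> factor_pairs g"
    using g(1) Sn_id by (auto simp: factor_pairs_def)
  have "(\<Sum>(x, y)\<in>factor_pairs g. T x y) = (\<Sum>(x, y)\<in>{(id, g), (g, id)}. T x y)"
  proof (rule sum.mono_neutral_right[OF fin sub], intro ballI)
    fix p assume p: "p \<in> factor_pairs g - {(id, g), (g, id)}"
    obtain x y where xy: "p = (x, y)" by fastforce
    have xs: "x \<in> Sn" "y \<in> Sn" "x \<circ> y = g" using p xy by (auto simp: factor_pairs_def)
    have "x \<noteq> id" using p xy xs(3) by auto
    moreover have "y \<noteq> id" using p xy xs(3) by auto
    ultimately show "(case p of (x, y) \<Rightarrow> T x y) = 0" using xy Tvan xs by simp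
  qed
  also have "\<dots> = T id g + T g id" using g(2) by simp
  finally have S: "(\<Sum>(x, y)\<in>factor_pairs g. T x y) = T id g + T g id" .
  define N where "N = sig (onev :: 'n vec)"
  have T1: "T id g = a *s (sig c *s (onev + onev) - (2 * N) *s c)"
  proof -
    have "T id g = \<kappa>L id (onev + onev) c + \<kappa>L id (v2 + act g v2) 0 + \<kappa>L id (v3 + act g v3) 0"
      unfolding T_def by (simp only: actone one0[OF g(1,2)] one0'[OF g(1,2)] c_def[symmetric])
    also have "\<dots> = \<kappa>L id (onev + onev) c" by (simp add: bl_zero2[OF abx[OF Sn_id]])
    also have "\<dots> = a *s (sig c *s (onev + onev) - sig (onev + onev :: 'n vec) *s c)" by (simp only: ka)
    also have "\<dots> = a *s (sig c *s (onev + onev) - (2 * N) *s c)"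
      by (simp only: sig_add N_def mult_2)
    finally show ?thesis .
  qed
  have abg: "alt_bilin_V (\<kappa>L g)" using abx[OF g(1)] .
  have T2: "T g id = (4 * a * N) *s c"
  proof -
    have cc: "\<kappa>L g v3 v2 = - c" using bl_antisym[OF abg] c_def by blast
    have "T g id = \<kappa>L g (v2 + v2) (a *s (N *s v3 - sig v3 *s onev))
                 + \<kappa>L g (v3 + v3) (a *s (sig v2 *s onev - N *s v2))"
    proof -
      have z: "\<kappa>L g (onev + onev) w = 0" for w
        by (simp only: bl_add1[OF abg] one0[OF g(1,2)]) simp
      have "T g id = \<kappa>L g (v2 + v2) (\<kappa>L id v3 onev) + \<kappa>L g (v3 + v3) (\<kappa>L id onev v2)"
        unfolding T_def by (simp only: act_id z add_0)
      also have "\<dots> = \<kappa>L g (v2 + v2) (a *s (N *s v3 - sig v3 *s onev))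
                 + \<kappa>L g (v3 + v3) (a *s (sig v2 *s onev - N *s v2))"
        by (simp only: ka N_def[symmetric])
      finally show ?thesis .
    qed
    also have "\<dots> = (4 * a * N) *s c"
      by (simp only: bl_add1[OF abg] bl_smult2[OF abg] bl_diff2[OF abg] one0'[OF g(1,2)] cc c_def[symmetric])
        (simp add: vec_eq_iff algebra_simps)
    finally show ?thesis .
  qed
  define X where "X = a *s (sig c *s (onev + onev) - (2 * N) *s c) + (4 * a * N) *s c"
  define u where "u = 2 *s (\<kappa>C g v3 onev *s v2 + \<kappa>C g onev v2 *s v3)"
  have XE: "X = act g u - u"
  proof -
    have "X = 2 *s (\<kappa>C g v2 v3 *s (act g onev - onev)
                 + \<kappa>C g v3 onev *s (act g v2 - v2)
                 + \<kappa>C g onev v2 *s (act g v3 - v3))"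
      using E S T1 T2 unfolding X_def by simp
    also have "\<dots> = act g u - u"
      unfolding u_def by (simp add: actone act_add act_smult vec_eq_iff algebra_simps)
    finally show ?thesis .
  qed
  have cfix: "act g c = c" using pre g(1) unfolding c_def pre_DOA_map_def by blast
  have Xfix: "act g X = X"
    unfolding X_def by (simp only: act_add act_smult act_diff cfix actone)
  have X0: "X = 0" using coboundary_fixed_zero[OF g(1) Xfix XE] .
  have Nv: "N = of_nat CARD('n)" unfolding N_def by (rule sig_onev)
  have N0: "N \<noteq> 0" using assms(1) Nv by simp
  have cp: "sig c + N * c $ p = 0" for p
  proof -
    have "X $ p = 0" using X0 by simp
    then have "a * (2 * (sig c + N * c $ p)) = 0"
      unfolding X_def by (simp add: onev_def algebra_simps)
    then have "2 * (sig c + N * c $ p) = 0" using a0 by (meson mult_eq_0_iff)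
    then show ?thesis by (rule two_mul_zero)
  qed
  have "(\<Sum>p\<in>UNIV. sig c + N * c $ p) = 0" using cp by simp
  then have "N * sig c + N * sig c = 0"
    by (simp add: sum.distrib sig_def sum_distrib_left Nv)
  then have sc: "sig c = 0" using N0 by simp
  have "c $ p = 0" for p using cp[of p] sc N0 by simp
  then have "c = 0" by (simp add: vec_eq_iff)
  then show False using c0 c_def by simp
qed


end
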